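(* Let $P_1$ and $P_2$ be non-constant rational functions with real coefficients such that $\mathbb{R}(P_1,P_2)=\mathbb{R}(z)$, i.e. $P_1$ and $P_2$ generate the whole field $\mathbb{R}(z)$ of real rational functions. Then $P_1^{-1}(\widehat{\mathbb{R}})\cap P_2^{-1}(\widehat{\mathbb{R}})=\widehat{\mathbb{R}}\cup A$, where $A$ is a finite subset of $\mathbb{CP}^1$.
   Context: $\widehat{\mathbb{R}}=\mathbb{R}\cup\{\infty\}\subset\mathbb{CP}^1$ denotes the projectively extended real line; $P_1,P_2$ are viewed as maps $\mathbb{CP}^1\to\mathbb{CP}^1$ and preimages are taken in $\mathbb{CP}^1$. *)

theory Defs
  imports "HOL-Analysis.Analysis" "HOL-Computational_Algebra.Computational_Algebra" "HOL-Computational_Algebra.Field_as_Ring"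
begin

text \<open>The Riemann sphere CP^1 is modelled as complex option: Some z is the finite
point z, None is the point at infinity.\<close>

type_synonym riemann_sphere = "complex option"

type_synonym real_ratfun = "real poly fract"

definition const_ratfun :: "real \<Rightarrow> real_ratfun" where
  "const_ratfun c = to_fract [:c:]"

text \<open>The rational function as a map CP^1 \<rightarrow> CP^1, computed from its reduced
representation p/q (coprime, q monic).\<close>
definition ratfun_map :: "real_ratfun \<Rightarrow> riemann_sphere \<Rightarrow> riemann_sphere" where
  "ratfun_map f w =
     (let (p, q) = quot_of_fract f;
          pc = map_poly complex_of_real p;
          qc = map_poly complex_of_real q
      in case w of
           Some z \<Rightarrow> (if poly qc z \<noteq> 0 then Some (poly pc z / poly qc z) else None)
         | None \<Rightarrow> (if degree p > degree q then None
                    else if degree p = degree q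
                      then Some (complex_of_real (lead_coeff p / lead_coeff q))
                    else Some 0))"

definition ext_real_line :: "riemann_sphere set" where
  "ext_real_line = insert None (Some ` (complex_of_real ` UNIV))"

inductive_set gen_subfield :: "real_ratfun \<Rightarrow> real_ratfun \<Rightarrow> real_ratfun set"
  for P1 P2 :: real_ratfun where
  const: "const_ratfun c \<in> gen_subfield P1 P2"
| gen1: "P1 \<in> gen_subfield P1 P2"
| gen2: "P2 \<in> gen_subfield P1 P2"
| add: "f \<in> gen_subfield P1 P2 \<Longrightarrow> g \<in> gen_subfield P1 P2 \<Longrightarrow> f + g \<in> gen_subfield P1 P2"
| neg: "f \<in> gen_subfield P1 P2 \<Longrightarrow> - f \<in> gen_subfield P1 P2"
| mult: "f \<in> gen_subfield P1 P2 \<Longrightarrow> g \<in> gen_subfield P1 P2 \<Longrightarrow> f * g \<in> gen_subfield P1 P2"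
| inv: "f \<in> gen_subfield P1 P2 \<Longrightarrow> inverse f \<in> gen_subfield P1 P2"

end

theory Submission
  imports Defs
begin

definition ev :: "real poly \<Rightarrow> complex \<Rightarrow> complex" where
  "ev p z = poly (map_poly complex_of_real p) z"

lemma mp_add: "map_poly complex_of_real (p + q) = map_poly of_real p + map_poly of_real q"
  by (intro poly_eqI) (simp add: coeff_map_poly)

lemma mp_minus: "map_poly complex_of_real (- p) = - map_poly of_real p"
  by (intro poly_eqI) (simp add: coeff_map_poly)

lemma mp_mult: "map_poly complex_of_real (p * q) = map_poly of_real p * map_poly of_real q"
proof (induction p)
  case 0 then show ?case by simp
next
  case (pCons a p)
  have "map_poly complex_of_real (pCons a p * q) = map_poly complex_of_real (smult a q) + map_poly complex_of_real (pCons 0 (p * q))"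
    by (simp only: mult_pCons_left mp_add)
  also have "\<dots> = smult (of_real a) (map_poly of_real q) + pCons 0 (map_poly of_real p * map_poly of_real q)"
    by (simp only: map_poly_smult map_poly_pCons of_real_0 of_real_mult pCons.IH)
  also have "\<dots> = map_poly complex_of_real (pCons a p) * map_poly of_real q"
    by (simp only: map_poly_pCons of_real_0 mult_pCons_left)
  finally show ?case .
qed
lemma ev_add: "ev (p + q) z = ev p z + ev q z" by (simp add: ev_def mp_add)
lemma ev_minus: "ev (- p) z = - ev p z" by (simp add: ev_def mp_minus)
lemma ev_mult: "ev (p * q) z = ev p z * ev q z" by (simp add: ev_def mp_mult)

lemma ev_cnj: "ev p (cnj z) = cnj (ev p z)"
  unfolding ev_def by (subst poly_cnj_real) (auto simp: coeff_map_poly)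

lemma ev_finite: "p \<noteq> 0 \<Longrightarrow> finite {z. ev p z = 0}"
  unfolding ev_def by (rule poly_roots_finite) (simp add: map_poly_eq_0_iff)

definition nm :: "real_ratfun \<Rightarrow> real poly" where "nm f = fst (quot_of_fract f)"
definition dn :: "real_ratfun \<Rightarrow> real poly" where "dn f = snd (quot_of_fract f)"
definition vl :: "real_ratfun \<Rightarrow> complex \<Rightarrow> complex" where "vl f z = ev (nm f) z / ev (dn f) z"

lemma dn_nz: "dn f \<noteq> 0" by (simp add: dn_def)
lemma Fract_nm_dn: "Fract (nm f) (dn f) = f" by (simp add: nm_def dn_def)

lemma vl_cnj: "vl f (cnj z) = cnj (vl f z)"
  by (simp add: vl_def ev_cnj)

lemma vl_Fract:
  assumes "b \<noteq> 0" "f = Fract a b" "ev (dn f) z \<noteq> 0" "ev b z \<noteq> 0"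
  shows "vl f z = ev a z / ev b z"
proof -
  have "Fract (nm f) (dn f) = Fract a b" using assms(2) by (simp add: Fract_nm_dn)
  then have "nm f * b = a * dn f" using assms(1) dn_nz by (simp add: eq_fract)
  then have "ev (nm f) z * ev b z = ev a z * ev (dn f) z" by (metis ev_mult)
  then show ?thesis using assms(3,4) by (simp add: vl_def field_simps)
qed

lemma vl_add:
  assumes "ev (dn f) z \<noteq> 0" "ev (dn g) z \<noteq> 0" "ev (dn (f+g)) z \<noteq> 0"
  shows "vl (f + g) z = vl f z + vl g z"
proof -
  have "f + g = Fract (nm f) (dn f) + Fract (nm g) (dn g)" by (simp only: Fract_nm_dn)
  also have "\<dots> = Fract (nm f * dn g + nm g * dn f) (dn f * dn g)"
    using dn_nz[of f] dn_nz[of g] by (rule add_fract)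
  finally have e: "f + g = Fract (nm f * dn g + nm g * dn f) (dn f * dn g)" .
  have "vl (f+g) z = ev (nm f * dn g + nm g * dn f) z / ev (dn f * dn g) z"
    by (rule vl_Fract[OF _ e]) (use assms dn_nz in \<open>auto simp: ev_mult\<close>)
  also have "\<dots> = (ev (nm f) z * ev (dn g) z + ev (nm g) z * ev (dn f) z) / (ev (dn f) z * ev (dn g) z)"
    by (simp only: ev_mult ev_add)
  also have "\<dots> = vl f z + vl g z"
    using assms(1,2) unfolding vl_def by (simp add: add_divide_distrib)
  finally show ?thesis .
qed

lemma vl_mult:
  assumes "ev (dn f) z \<noteq> 0" "ev (dn g) z \<noteq> 0" "ev (dn (f*g)) z \<noteq> 0"
  shows "vl (f * g) z = vl f z * vl g z"
proof -
  have "f * g = Fract (nm f) (dn f) * Fract (nm g) (dn g)" by (simp only: Fract_nm_dn)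
  also have "\<dots> = Fract (nm f * nm g) (dn f * dn g)"
    by (rule mult_fract)
  finally have e: "f * g = Fract (nm f * nm g) (dn f * dn g)" .
  have "vl (f*g) z = ev (nm f * nm g) z / ev (dn f * dn g) z"
    by (rule vl_Fract[OF _ e]) (use assms dn_nz[of f] dn_nz[of g] in \<open>auto simp: ev_mult\<close>)
  also have "\<dots> = (ev (nm f) z * ev (nm g) z) / (ev (dn f) z * ev (dn g) z)"
    by (simp only: ev_mult)
  also have "\<dots> = vl f z * vl g z"
    unfolding vl_def by simp
  finally show ?thesis .
qed

lemma vl_neg:
  assumes "ev (dn f) z \<noteq> 0" "ev (dn (-f)) z \<noteq> 0"
  shows "vl (- f) z = - vl f z"
proof -
  have "- f = - Fract (nm f) (dn f)" by (simp only: Fract_nm_dn)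
  also have "\<dots> = Fract (- nm f) (dn f)"
    by (rule minus_fract)
  finally have e: "- f = Fract (- nm f) (dn f)" .
  have "vl (-f) z = ev (- nm f) z / ev (dn f) z"
    by (rule vl_Fract[OF _ e]) (use assms dn_nz[of f] in auto)
  then show ?thesis by (simp add: vl_def ev_minus)
qed

lemma vl_inv:
  assumes "ev (dn f) z \<noteq> 0" "ev (dn (inverse f)) z \<noteq> 0"
  shows "vl (inverse f) z = inverse (vl f z)"
proof (cases "f = 0")
  case True then show ?thesis by (simp add: vl_def nm_def ev_def)
next
  case False
  then have nz: "nm f \<noteq> 0" by (simp add: nm_def)
  have "inverse f = inverse (Fract (nm f) (dn f))" by (simp only: Fract_nm_dn)
  then have e: "inverse f = Fract (dn f) (nm f)" by (simp only: inverse_fract)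
  have "Fract (nm (inverse f)) (dn (inverse f)) = Fract (dn f) (nm f)" using e by (simp add: Fract_nm_dn)
  then have "nm (inverse f) * nm f = dn f * dn (inverse f)" using nz dn_nz[of "inverse f"] by (simp add: eq_fract)
  then have "ev (nm (inverse f)) z * ev (nm f) z = ev (dn f) z * ev (dn (inverse f)) z" by (metis ev_mult)
  then have "ev (nm f) z \<noteq> 0" using assms by auto
  then have "vl (inverse f) z = ev (dn f) z / ev (nm f) z"
    using assms nz e by (intro vl_Fract) auto
  then show ?thesis by (simp add: vl_def)
qed


lemma rm_Some: "ratfun_map f (Some z) = (if ev (dn f) z \<noteq> 0 then Some (vl f z) else None)"
  by (simp add: ratfun_map_def ev_def vl_def nm_def dn_def split_beta Let_def)

lemma ext_Some: "Some w \<in> ext_real_line \<longleftrightarrow> w \<in> \<real>"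
  by (auto simp: ext_real_line_def Reals_def)

lemma vl_real: "r \<in> \<real> \<Longrightarrow> vl f r \<in> \<real>"
  by (metis Reals_cnj_iff vl_cnj)

lemma rm_ext: "w \<in> ext_real_line \<Longrightarrow> ratfun_map f w \<in> ext_real_line"
proof (cases w)
  case None
  have "complex_of_real a / complex_of_real b \<in> range complex_of_real" for a b
    by (metis of_real_divide rangeI)
  then show ?thesis using None
    by (auto simp: ratfun_map_def split_beta Let_def ext_real_line_def)
next
  case (Some z)
  assume "w \<in> ext_real_line"
  then have "z \<in> \<real>" using Some ext_Some by simp
  moreover have "None \<in> ext_real_line" by (simp add: ext_real_line_def)
  ultimately show ?thesis using Some by (auto simp: rm_Some ext_Some vl_real)
qed

lemma Z_finite: "finite {z. ev (dn f) z = 0}"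
  by (rule ev_finite) (rule dn_nz)

lemma key:
  assumes "f \<in> gen_subfield P1 P2"
  shows "finite {z. ev (dn P1) z \<noteq> 0 \<and> ev (dn P2) z \<noteq> 0 \<and> vl P1 z \<in> \<real> \<and> vl P2 z \<in> \<real> \<and> vl f z \<notin> \<real>}"
  (is "finite (?S f)")
  using assms
proof (induction rule: gen_subfield.induct)
  case (const c)
  have "vl (const_ratfun c) z = of_real c" for z
    by (simp add: const_ratfun_def vl_def nm_def dn_def ev_def map_poly_pCons)
  then show ?case by simp
next
  case gen1
  have "?S P1 = {}" by blast
  then show ?case by (metis finite.emptyI)
next
  case gen2
  have "?S P2 = {}" by blast
  then show ?case by (metis finite.emptyI)
next
  case (add f g)
  have "?S (f+g) \<subseteq> ?S f \<union> ?S g \<union> {z. ev (dn f) z = 0} \<union> {z. ev (dn g) z = 0} \<union> {z. ev (dn (f+g)) z = 0}"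
    using vl_add by fastforce
  then show ?case using add.IH Z_finite by (meson finite_Un finite_subset)
next
  case (neg f)
  have "?S (-f) \<subseteq> ?S f \<union> {z. ev (dn f) z = 0} \<union> {z. ev (dn (-f)) z = 0}"
    using vl_neg by fastforce
  then show ?case using neg.IH Z_finite by (meson finite_Un finite_subset)
next
  case (mult f g)
  have "?S (f*g) \<subseteq> ?S f \<union> ?S g \<union> {z. ev (dn f) z = 0} \<union> {z. ev (dn g) z = 0} \<union> {z. ev (dn (f*g)) z = 0}"
    using vl_mult by fastforce
  then show ?case using mult.IH Z_finite by (meson finite_Un finite_subset)
next
  case (inv f)
  have "?S (inverse f) \<subseteq> ?S f \<union> {z. ev (dn f) z = 0} \<union> {z. ev (dn (inverse f)) z = 0}"
    using vl_inv by fastforce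
  then show ?case using inv.IH Z_finite by (meson finite_Un finite_subset)
qed

theorem theorem3:
  fixes P1 P2 :: real_ratfun
  assumes "\<forall>c. P1 \<noteq> const_ratfun c"
    and "\<forall>c. P2 \<noteq> const_ratfun c"
    and "gen_subfield P1 P2 = UNIV"
  shows "\<exists>A :: riemann_sphere set. finite A \<and>
           ratfun_map P1 -` ext_real_line \<inter> ratfun_map P2 -` ext_real_line
             = ext_real_line \<union> A"
proof -
  define X :: real_ratfun where "X = to_fract [:0, 1:]"
  have vX: "vl X z = z" for z
    by (simp add: X_def vl_def nm_def dn_def ev_def map_poly_pCons)
  have "X \<in> gen_subfield P1 P2" using assms(3) by simp
  from key[OF this] have fin: "finite {z. ev (dn P1) z \<noteq> 0 \<and> ev (dn P2) z \<noteq> 0 \<and> vl P1 z \<in> \<real> \<and> vl P2 z \<in> \<real> \<and> z \<notin> \<real>}"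
    by (simp add: vX)
  define I where "I = ratfun_map P1 -` ext_real_line \<inter> ratfun_map P2 -` ext_real_line"
  define A where "A = I - ext_real_line"
  have sub: "ext_real_line \<subseteq> I" unfolding I_def using rm_ext by blast
  have "A \<subseteq> Some ` ({z. ev (dn P1) z = 0} \<union> {z. ev (dn P2) z = 0} \<union>
      {z. ev (dn P1) z \<noteq> 0 \<and> ev (dn P2) z \<noteq> 0 \<and> vl P1 z \<in> \<real> \<and> vl P2 z \<in> \<real> \<and> z \<notin> \<real>})"
  proof
    fix x assume x: "x \<in> A"
    then obtain z where xz: "x = Some z"
      by (cases x) (auto simp: A_def ext_real_line_def)
    have zr: "z \<notin> \<real>" using x xz by (auto simp: A_def ext_Some)
    have "z \<in> {z. ev (dn P1) z = 0} \<union> {z. ev (dn P2) z = 0} \<union>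
      {z. ev (dn P1) z \<noteq> 0 \<and> ev (dn P2) z \<noteq> 0 \<and> vl P1 z \<in> \<real> \<and> vl P2 z \<in> \<real> \<and> z \<notin> \<real>}"
      using x xz zr by (auto simp: A_def I_def rm_Some ext_Some split: if_splits)
    then show "x \<in> Some ` ({z. ev (dn P1) z = 0} \<union> {z. ev (dn P2) z = 0} \<union>
      {z. ev (dn P1) z \<noteq> 0 \<and> ev (dn P2) z \<noteq> 0 \<and> vl P1 z \<in> \<real> \<and> vl P2 z \<in> \<real> \<and> z \<notin> \<real>})"
      using xz by blast
  qed
  then have "finite A" using fin Z_finite[of P1] Z_finite[of P2]
    by (meson finite_Un finite_imageI finite_subset)
  moreover have "I = ext_real_line \<union> A" using sub unfolding A_def by blast
  ultimately show ?thesis unfolding I_def by blast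
qed

end
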